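(* Let $H,K$ be $n$-Hilbert spaces, fix $a_2,\dots,a_n\in H$, $b_2,\dots,b_n\in K$, $C_1\in\mathcal{GB}(H_F)$, $C_2\in\mathcal{GB}(K_G)$. Let $\{f_i\}_{i=1}^\infty$ be a $C_1$-controlled frame associated to $(a_2,\dots,a_n)$ for $H$ with bounds $A,B$ and $\{g_j\}_{j=1}^\infty$ a $C_2$-controlled frame associated to $(b_2,\dots,b_n)$ for $K$ with bounds $C,D$, with frame operators $S_{C_1}$, $S_{C_2}$. Then $AC\,I_{F\otimes G}\le S_{C_1\otimes C_2}\le BD\,I_{F\otimes G}$, where $I_{F\otimes G}$ is the identity on $H_F\otimes K_G$ and $S_{C_1\otimes C_2}$ is the frame operator of $\{f_i\otimes g_j\}_{i,j=1}^\infty$.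
   Context: Let $n\ge2$. For a complex $n$-Hilbert space $H$ with $n$-inner product $\langle\cdot,\cdot|\cdot,\dots,\cdot\rangle_1$ and $n$-norm $\|x_1,\dots,x_n\|_1=\langle x_1,x_1|x_2,\dots,x_n\rangle_1^{1/2}$, and fixed $a_2,\dots,a_n\in H$, $F=\{a_2,\dots,a_n\}$: $\langle x,y\rangle_F=\langle x,y|a_2,\dots,a_n\rangle_1$ is a semi-inner product on $H$ inducing an inner product on $H/L_F$ ($L_F=\mathrm{span}\,F$); identifying $H/L_F$ with an algebraic complement of $L_F$, $H_F$ is its Hilbert completion, with norm written $\|f,a_2,\dots,a_n\|_1$. Likewise $K$ with $\langle\cdot,\cdot|\cdot,\dots,\cdot\rangle_2$, $G=\{b_2,\dots,b_n\}$, Hilbert space $K_G$. $H\otimes K$ carries the $n$-inner product $\langle f_1\otimes g_1,f_2\otimes g_2|f_3\otimes g_3,\dots,f_n\otimes g_n\rangle=\langle f_1,f_2|f_3,\dots,f_n\rangle_1\langle g_1,g_2|g_3,\dots,g_n\rangle_2$; $H_F\otimes K_G$ is the Hilbert tensor product and $(Q\otimes T)(f\otimes g)=Qf\otimes Tg$. $\mathcal{GB}(\cdot)$: bounded operators with bounded inverse; $\le$ between self-adjoint operators means $\langle Tx,x\rangle\le\langle Sx,x\rangle$ for all $x$. For $C\in\mathcal{GB}(H_F)$, $\{f_i\}\subseteq H$ is a $C$-controlled frame associated to $(a_2,\dots,a_n)$ for $H$ with bounds $A,B$ if $A\|f,a_2,\dots,a_n\|_1^2\le\sum_i\langle f,f_i|a_2,\dots,a_n\rangle_1\langle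 Cf_i,f|a_2,\dots,a_n\rangle_1\le B\|f,a_2,\dots,a_n\|_1^2$ for all $f\in H_F$; its frame operator is $S_Cf=\sum_i\langle f,f_i|a_2,\dots,a_n\rangle_1Cf_i$ (similarly for $K$). The frame operator of $\{f_i\otimes g_j\}$ is $S_{C_1\otimes C_2}(f\otimes g)=\sum_{i,j}\langle f\otimes g,f_i\otimes g_j|a_2\otimes b_2,\dots,a_n\otimes b_n\rangle(C_1\otimes C_2)(f_i\otimes g_j)$. *)

theory Defs
  imports Complex_Main "HOL-Library.Multiset"
begin

definition list_dependent :: "(complex \<Rightarrow> 'v::ab_group_add \<Rightarrow> 'v) \<Rightarrow> 'v list \<Rightarrow> bool" where
  "list_dependent sc xs \<longleftrightarrow>
     (\<exists>c :: nat \<Rightarrow> complex. (\<exists>i<length xs. c i \<noteq> 0) \<and>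
        (\<Sum>i<length xs. sc (c i) (xs ! i)) = 0)"

text \<open>ip x y zs stands for the n-inner product <x,y|z_2,...,z_n>, where
  zs = [z_2,...,z_n] is a list of length n-1.\<close>

definition n_inner_product ::
  "nat \<Rightarrow> (complex \<Rightarrow> 'v::ab_group_add \<Rightarrow> 'v) \<Rightarrow> ('v \<Rightarrow> 'v \<Rightarrow> 'v list \<Rightarrow> complex) \<Rightarrow> bool" where
  "n_inner_product n sc ip \<longleftrightarrow>
     (\<forall>x zs. length zs = n - 1 \<longrightarrow>
        Im (ip x x zs) = 0 \<and> Re (ip x x zs) \<ge> 0 \<and>
        (ip x x zs = 0 \<longleftrightarrow> list_dependent sc (x # zs))) \<and>
     (\<forall>xs ys. length xs = n \<longrightarrow> mset ys = mset xs \<longrightarrow>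
        ip (hd xs) (hd xs) (tl xs) = ip (hd ys) (hd ys) (tl ys)) \<and>
     (\<forall>x y zs. length zs = n - 1 \<longrightarrow> ip x y zs = cnj (ip y x zs)) \<and>
     (\<forall>c x y zs. length zs = n - 1 \<longrightarrow> ip (sc c x) y zs = c * ip x y zs) \<and>
     (\<forall>x x' y zs. length zs = n - 1 \<longrightarrow> ip (x + x') y zs = ip x y zs + ip x' y zs)"

definition n_norm :: "('v \<Rightarrow> 'v \<Rightarrow> 'v list \<Rightarrow> complex) \<Rightarrow> 'v \<Rightarrow> 'v list \<Rightarrow> real" where
  "n_norm ip x zs = sqrt (Re (ip x x zs))"

definition n_cauchy :: "nat \<Rightarrow> ('v::ab_group_add \<Rightarrow> 'v \<Rightarrow> 'v list \<Rightarrow> complex) \<Rightarrow> (nat \<Rightarrow> 'v) \<Rightarrow> bool" where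
  "n_cauchy n ip X \<longleftrightarrow>
     (\<forall>zs. length zs = n - 1 \<longrightarrow>
        (\<forall>e>0. \<exists>N. \<forall>k\<ge>N. \<forall>l\<ge>N. n_norm ip (X k - X l) zs < e))"

definition n_converges :: "nat \<Rightarrow> ('v::ab_group_add \<Rightarrow> 'v \<Rightarrow> 'v list \<Rightarrow> complex) \<Rightarrow> (nat \<Rightarrow> 'v) \<Rightarrow> 'v \<Rightarrow> bool" where
  "n_converges n ip X x \<longleftrightarrow>
     (\<forall>zs. length zs = n - 1 \<longrightarrow> (\<lambda>k. n_norm ip (X k - x) zs) \<longlonglongrightarrow> 0)"

definition n_hilbert_space ::
  "nat \<Rightarrow> (complex \<Rightarrow> 'v::ab_group_add \<Rightarrow> 'v) \<Rightarrow> ('v \<Rightarrow> 'v \<Rightarrow> 'v list \<Rightarrow> complex) \<Rightarrow> bool" where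
  "n_hilbert_space n sc ip \<longleftrightarrow>
     vector_space sc \<and>
     (\<exists>xs. length xs = n \<and> \<not> list_dependent sc xs) \<and>
     n_inner_product n sc ip \<and>
     (\<forall>X. n_cauchy n ip X \<longrightarrow> (\<exists>x. n_converges n ip X x))"

definition hnorm :: "('v \<Rightarrow> 'v \<Rightarrow> complex) \<Rightarrow> 'v \<Rightarrow> real" where
  "hnorm ip x = sqrt (Re (ip x x))"

definition hilbert_space :: "(complex \<Rightarrow> 'v::ab_group_add \<Rightarrow> 'v) \<Rightarrow> ('v \<Rightarrow> 'v \<Rightarrow> complex) \<Rightarrow> bool" where
  "hilbert_space sc ip \<longleftrightarrow>
     vector_space sc \<and>
     (\<forall>x x' y. ip (x + x') y = ip x y + ip x' y) \<and>
     (\<forall>c x y. ip (sc c x) y = c * ip x y) \<and>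
     (\<forall>x y. ip x y = cnj (ip y x)) \<and>
     (\<forall>x. Im (ip x x) = 0 \<and> Re (ip x x) \<ge> 0) \<and>
     (\<forall>x. ip x x = 0 \<longrightarrow> x = 0) \<and>
     (\<forall>X. (\<forall>e>0. \<exists>N. \<forall>k\<ge>N. \<forall>l\<ge>N. hnorm ip (X k - X l) < e) \<longrightarrow>
          (\<exists>x. (\<lambda>k. hnorm ip (X k - x)) \<longlonglongrightarrow> 0))"

definition bounded_op :: "(complex \<Rightarrow> 'v::ab_group_add \<Rightarrow> 'v) \<Rightarrow> ('v \<Rightarrow> 'v \<Rightarrow> complex) \<Rightarrow> ('v \<Rightarrow> 'v) \<Rightarrow> bool" where
  "bounded_op sc ip T \<longleftrightarrow>
     (\<forall>x y. T (x + y) = T x + T y) \<and> (\<forall>c x. T (sc c x) = sc c (T x)) \<and>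
     (\<exists>M. \<forall>x. hnorm ip (T x) \<le> M * hnorm ip x)"

definition GB :: "(complex \<Rightarrow> 'v::ab_group_add \<Rightarrow> 'v) \<Rightarrow> ('v \<Rightarrow> 'v \<Rightarrow> complex) \<Rightarrow> ('v \<Rightarrow> 'v) set" where
  "GB sc ip = {T. bounded_op sc ip T \<and>
       (\<exists>T'. bounded_op sc ip T' \<and> (\<forall>x. T' (T x) = x) \<and> (\<forall>x. T (T' x) = x))}"

definition hsum_unconditional :: "('v::ab_group_add \<Rightarrow> 'v \<Rightarrow> complex) \<Rightarrow> ('i \<Rightarrow> 'v) \<Rightarrow> 'i set \<Rightarrow> 'v \<Rightarrow> bool" where
  "hsum_unconditional ip u I s \<longleftrightarrow>
     (\<forall>e>0. \<exists>F0. finite F0 \<and> F0 \<subseteq> I \<and>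
        (\<forall>F. finite F \<and> F0 \<subseteq> F \<and> F \<subseteq> I \<longrightarrow> hnorm ip (sum u F - s) < e))"

text \<open>H_F is the Hilbert completion of H/L_F with the inner product
  <x,y>_F = <x,y|a_2,...,a_n>. We describe it up to unitary equivalence:
  a Hilbert space (sF, ipF) together with the linear map j : H -> H_F
  (quotient map H -> H/L_F followed by the inclusion into the completion),
  which preserves the F-inner product and has dense range.\<close>
definition is_HF ::
  "(complex \<Rightarrow> 'v::ab_group_add \<Rightarrow> 'v) \<Rightarrow> ('v \<Rightarrow> 'v \<Rightarrow> 'v list \<Rightarrow> complex) \<Rightarrow> 'v list \<Rightarrow>
   (complex \<Rightarrow> 'w::ab_group_add \<Rightarrow> 'w) \<Rightarrow> ('w \<Rightarrow> 'w \<Rightarrow> complex) \<Rightarrow> ('v \<Rightarrow> 'w) \<Rightarrow> bool" where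
  "is_HF sc ip as sF ipF j \<longleftrightarrow>
     hilbert_space sF ipF \<and>
     (\<forall>x y. j (x + y) = j x + j y) \<and> (\<forall>c x. j (sc c x) = sF c (j x)) \<and>
     (\<forall>x y. ipF (j x) (j y) = ip x y as) \<and>
     (\<forall>w. \<forall>e>0. \<exists>x. hnorm ipF (j x - w) < e)"

text \<open>fs is a C-controlled frame associated to (a_2,...,a_n) for H with bounds A, B,
  where H_F is realised by (sF, ipF, j) as above; an element f_i of H is regarded
  as the element j f_i of H_F.\<close>
definition controlled_frame ::
  "('w \<Rightarrow> 'w \<Rightarrow> complex) \<Rightarrow> ('v \<Rightarrow> 'w) \<Rightarrow> ('w \<Rightarrow> 'w) \<Rightarrow> (nat \<Rightarrow> 'v) \<Rightarrow> real \<Rightarrow> real \<Rightarrow> bool" where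
  "controlled_frame ipF j C fs A B \<longleftrightarrow>
     0 < A \<and> A \<le> B \<and>
     (\<forall>f. \<exists>s. (\<lambda>i. ipF f (j (fs i)) * ipF (C (j (fs i))) f) sums s \<and>
        Im s = 0 \<and> A * (hnorm ipF f)\<^sup>2 \<le> Re s \<and> Re s \<le> B * (hnorm ipF f)\<^sup>2)"

definition is_hilbert_tensor ::
  "(complex \<Rightarrow> 'f::ab_group_add \<Rightarrow> 'f) \<Rightarrow> ('f \<Rightarrow> 'f \<Rightarrow> complex) \<Rightarrow>
   (complex \<Rightarrow> 'g::ab_group_add \<Rightarrow> 'g) \<Rightarrow> ('g \<Rightarrow> 'g \<Rightarrow> complex) \<Rightarrow>
   (complex \<Rightarrow> 't::ab_group_add \<Rightarrow> 't) \<Rightarrow> ('t \<Rightarrow> 't \<Rightarrow> complex) \<Rightarrow> ('f \<Rightarrow> 'g \<Rightarrow> 't) \<Rightarrow> bool" where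
  "is_hilbert_tensor sF ipF sG ipG sT ipT tp \<longleftrightarrow>
     hilbert_space sT ipT \<and>
     (\<forall>x x' y. tp (x + x') y = tp x y + tp x' y) \<and>
     (\<forall>x y y'. tp x (y + y') = tp x y + tp x y') \<and>
     (\<forall>c x y. tp (sF c x) y = sT c (tp x y)) \<and>
     (\<forall>c x y. tp x (sG c y) = sT c (tp x y)) \<and>
     (\<forall>x y x' y'. ipT (tp x y) (tp x' y') = ipF x x' * ipG y y') \<and>
     (\<forall>z. \<forall>e>0. \<exists>ps. hnorm ipT (z - sum_list (map (\<lambda>(x, y). tp x y) ps)) < e)"

text \<open>S is the frame operator S_{C1\<otimes>C2} of {f_i \<otimes> g_j}: the bounded linear operator on
  H_F \<otimes> K_G given on elementary tensors by
  S(f\<otimes>g) = \<Sum>_{i,j} <f\<otimes>g, f_i\<otimes>g_j | a_2\<otimes>b_2,...,a_n\<otimes>b_n> (C1\<otimes>C2)(f_i\<otimes>g_j),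
  where the tensor n-inner product evaluates to <f,f_i>_F <g,g_j>_G.\<close>
definition is_tensor_frame_operator ::
  "('f::ab_group_add \<Rightarrow> 'f \<Rightarrow> complex) \<Rightarrow> ('v \<Rightarrow> 'f) \<Rightarrow> ('f \<Rightarrow> 'f) \<Rightarrow> (nat \<Rightarrow> 'v) \<Rightarrow>
   ('g::ab_group_add \<Rightarrow> 'g \<Rightarrow> complex) \<Rightarrow> ('u \<Rightarrow> 'g) \<Rightarrow> ('g \<Rightarrow> 'g) \<Rightarrow> (nat \<Rightarrow> 'u) \<Rightarrow>
   (complex \<Rightarrow> 't::ab_group_add \<Rightarrow> 't) \<Rightarrow> ('t \<Rightarrow> 't \<Rightarrow> complex) \<Rightarrow> ('f \<Rightarrow> 'g \<Rightarrow> 't) \<Rightarrow> ('t \<Rightarrow> 't) \<Rightarrow> bool" where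
  "is_tensor_frame_operator ipF jF C1 fs ipG jG C2 gs sT ipT tp S \<longleftrightarrow>
     bounded_op sT ipT S \<and>
     (\<forall>f g. hsum_unconditional ipT
        (\<lambda>(i, k). sT (ipF f (jF (fs i)) * ipG g (jG (gs k)))
                       (tp (C1 (jF (fs i))) (C2 (jG (gs k)))))
        UNIV (S (tp f g)))"

end

theory Submission
  imports Defs "HOL-Library.Infinite_Set"
begin

definition nn :: "complex \<Rightarrow> bool" where "nn z \<longleftrightarrow> Im z = 0 \<and> 0 \<le> Re z"

lemma nn_add: "nn a \<Longrightarrow> nn b \<Longrightarrow> nn (a + b)" by (simp add: nn_def)
lemma nn_mult: "nn a \<Longrightarrow> nn b \<Longrightarrow> nn (a * b)" by (simp add: nn_def)
lemma nn_0: "nn 0" by (simp add: nn_def)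

locale sesq =
  fixes s :: "complex \<Rightarrow> 'a::ab_group_add \<Rightarrow> 'a" and b :: "'a \<Rightarrow> 'a \<Rightarrow> complex"
  assumes ladd: "b (x + y) z = b x z + b y z"
    and lscale: "b (s c x) z = c * b x z"
    and radd: "b x (y + z) = b x y + b x z"
    and rscale: "b x (s c y) = cnj c * b x y"
begin
lemma lzero: "b 0 z = 0" using ladd[of 0 0 z] by simp
lemma rzero: "b z 0 = 0" using radd[of z 0 0] by simp
lemma lminus: "b (x - y) z = b x z - b y z" using ladd[of "x-y" y z] by simp
lemma rminus: "b z (x - y) = b z x - b z y" using radd[of z "x-y" y] by simp
lemma lsum: "b (sum h A) z = (\<Sum>a\<in>A. b (h a) z)"
  by (induction A rule: infinite_finite_induct) (auto simp: lzero ladd)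
lemma rsum: "b z (sum h A) = (\<Sum>a\<in>A. b z (h a))"
  by (induction A rule: infinite_finite_induct) (auto simp: rzero radd)

lemma herm_if_real_diag:
  assumes r: "\<And>x. Im (b x x) = 0"
  shows "b x y = cnj (b y x)"
proof -
  have 1: "b (x+y) (x+y) = b x x + b x y + b y x + b y y" by (simp add: ladd radd)
  have 2: "b (x + s \<i> y) (x + s \<i> y) = b x x - \<i> * b x y + \<i> * b y x + b y y"
    by (simp add: ladd radd lscale rscale algebra_simps)
  have a: "Im (b x y) + Im (b y x) = 0" using r[of "x+y"] r[of x] r[of y] 1 by simp
  have c: "Re (b y x) - Re (b x y) = 0" using r[of "x + s \<i> y"] r[of x] r[of y] 2 by simp
  show ?thesis using a c by (intro complex_eqI) simp_all
qed
end

locale psd = sesq +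
  assumes herm: "b x y = cnj (b y x)" and pos: "0 \<le> Re (b x x)"
begin
lemma diag_real: "Im (b x x) = 0"
  using arg_cong[where f=Im, OF herm[of x x]] by simp
lemma nn_diag: "nn (b x x)" using diag_real pos by (simp add: nn_def)

lemma expand: "b (x - s c y) (x - s c y) = b x x - cnj c * b x y - c * b y x + c * cnj c * b y y"
  by (simp only: lminus rminus lscale rscale) (simp add: algebra_simps)

lemma null:
  assumes "Re (b u u) = 0"
  shows "b x u = 0"
proof (rule ccontr)
  assume ne: "b x u \<noteq> 0"
  have uu: "b u u = 0" using assms diag_real[of u] by (simp add: complex_eq_iff)
  define q where "q = (Re (b x u))\<^sup>2 + (Im (b x u))\<^sup>2"
  have qpos: "q > 0" using ne by (simp add: q_def complex_neq_0)
  have zz: "b x u * cnj (b x u) = complex_of_real q" by (simp only: q_def complex_mult_cnj)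
  define t where "t = (Re (b x x) + 1) / (2 * q)"
  define c where "c = complex_of_real t * b x u"
  have "0 \<le> Re (b (x - s c u) (x - s c u))" by (rule pos)
  also have "b (x - s c u) (x - s c u) = b x x - cnj c * b x u - c * b u x"
    using expand[of x c u] uu by simp
  also have "cnj c * b x u = complex_of_real (t * q)"
  proof -
    have "cnj c * b x u = complex_of_real t * (b x u * cnj (b x u))" by (simp add: c_def algebra_simps)
    also have "\<dots> = complex_of_real (t * q)" by (simp only: zz of_real_mult)
    finally show ?thesis .
  qed
  also have "c * b u x = complex_of_real (t * q)"
  proof -
    have "c * b u x = complex_of_real t * (b x u * cnj (b x u))" using herm[of u x] by (simp only: c_def) (simp add: algebra_simps)
    also have "\<dots> = complex_of_real (t * q)" by (simp only: zz of_real_mult)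
    finally show ?thesis .
  qed
  finally have "0 \<le> Re (b x x) - 2 * t * q" by (simp add: algebra_simps)
  moreover have "2 * t * q = Re (b x x) + 1" using qpos by (simp add: t_def)
  ultimately show False by simp
qed

lemma cs: "cmod (b x y) \<le> sqrt (Re (b x x)) * sqrt (Re (b y y))"
proof (cases "Re (b y y) = 0")
  case True
  then show ?thesis using null[of y x] by (simp add: pos real_sqrt_ge_zero)
next
  case False
  define r where "r = Re (b y y)"
  have rpos: "r > 0" using False pos[of y] by (simp add: r_def)
  have yy: "b y y = complex_of_real r" using diag_real[of y] by (simp add: r_def complex_eq_iff)
  define c where "c = b x y / complex_of_real r"
  define q where "q = (Re (b x y))\<^sup>2 + (Im (b x y))\<^sup>2"
  have zz: "b x y * cnj (b x y) = complex_of_real q" by (simp only: q_def complex_mult_cnj)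
  have "0 \<le> Re (b (x - s c y) (x - s c y))" by (rule pos)
  also have "b (x - s c y) (x - s c y) = b x x - cnj c * b x y - c * b y x + c * cnj c * b y y"
    by (rule expand)
  also have "cnj c * b x y = complex_of_real (q / r)"
  proof -
    have "cnj c * b x y = (b x y * cnj (b x y)) / complex_of_real r" by (simp add: c_def algebra_simps)
    also have "\<dots> = complex_of_real (q / r)" by (simp only: zz of_real_divide)
    finally show ?thesis .
  qed
  also have "c * b y x = complex_of_real (q / r)"
  proof -
    have "c * b y x = (b x y * cnj (b x y)) / complex_of_real r" using herm[of y x] by (simp only: c_def) (simp add: algebra_simps)
    also have "\<dots> = complex_of_real (q / r)" by (simp only: zz of_real_divide)
    finally show ?thesis .
  qed
  also have "c * cnj c * b y y = complex_of_real (q / r)"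
  proof -
    have "c * cnj c * b y y = (b x y * cnj (b x y)) / complex_of_real r" unfolding c_def yy using rpos by (simp add: field_simps power2_eq_square)
    also have "\<dots> = complex_of_real (q / r)" by (simp only: zz of_real_divide)
    finally show ?thesis .
  qed
  finally have "0 \<le> Re (b x x) - q / r" by simp
  hence "q \<le> Re (b x x) * r" using rpos by (simp add: field_simps)
  hence "sqrt q \<le> sqrt (Re (b x x) * r)" by simp
  thus ?thesis by (simp add: q_def r_def real_sqrt_mult norm_complex_def)
qed
end


lemma schur:
  fixes m :: nat
  assumes "psd s1 b1" and "psd s2 b2"
  shows "nn (\<Sum>p<m. \<Sum>q<m. b1 (f p) (f q) * b2 (g p) (g q))"
  using assms
proof (induction m arbitrary: f)
  case 0 show ?case by (simp add: nn_0)
next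
  case (Suc m)
  interpret P1: psd s1 b1 by fact
  interpret P2: psd s2 b2 by fact
  define u where "u = f m"
  define \<mu> where "\<mu> p = (if b1 u u = 0 then 0 else b1 (f p) u / b1 u u)" for p
  have k1: "b1 (f p) u = \<mu> p * b1 u u" for p
  proof (cases "b1 u u = 0")
    case True then show ?thesis using P1.null[of u "f p"] by (simp add: \<mu>_def)
  next
    case False then show ?thesis by (simp add: \<mu>_def)
  qed
  define f' where "f' p = f p - s1 (\<mu> p) u" for p
  have k2: "b1 (f' p) u = 0" for p by (simp add: f'_def P1.lminus P1.lscale k1)
  have fp: "f p = f' p + s1 (\<mu> p) u" for p by (simp add: f'_def)
  have k3: "b1 (f p) (f q) = b1 (f' p) (f' q) + \<mu> p * cnj (\<mu> q) * b1 u u" for p q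
  proof -
    have h: "b1 u (f' q) = 0" using P1.herm[of u "f' q"] k2[of q] by simp
    have "b1 (f p) (f q) = b1 (f' p + s1 (\<mu> p) u) (f' q + s1 (\<mu> q) u)" by (simp only: fp[symmetric])
    also have "\<dots> = b1 (f' p) (f' q) + cnj (\<mu> q) * b1 (f' p) u + \<mu> p * b1 u (f' q) + \<mu> p * cnj (\<mu> q) * b1 u u"
      by (simp add: P1.ladd P1.radd P1.lscale P1.rscale algebra_simps)
    finally show ?thesis using k2 h by simp
  qed
  have k4: "b1 (f' m) (f' m) = 0"
  proof (cases "b1 u u = 0")
    case True
    have "b1 u u = b1 (f' m) (f' m) + \<mu> m * cnj (\<mu> m) * b1 u u" using k3[of m m] by (simp add: u_def)
    with True show ?thesis by simp
  next
    case False
    then have m1: "\<mu> m = 1" by (simp add: \<mu>_def u_def)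
    have "b1 u u = b1 (f' m) (f' m) + \<mu> m * cnj (\<mu> m) * b1 u u" using k3[of m m] by (simp add: u_def)
    with m1 show ?thesis by simp
  qed
  have z1: "b1 x (f' m) = 0" for x using P1.null[of "f' m" x] k4 by simp
  have z2: "b1 (f' m) x = 0" for x using P1.herm[of "f' m" x] z1[of x] by simp
  define W where "W = (\<Sum>p<Suc m. s2 (\<mu> p) (g p))"
  have "(\<Sum>p<Suc m. \<Sum>q<Suc m. b1 (f p) (f q) * b2 (g p) (g q))
     = (\<Sum>p<Suc m. \<Sum>q<Suc m. b1 (f' p) (f' q) * b2 (g p) (g q))
       + b1 u u * (\<Sum>p<Suc m. \<Sum>q<Suc m. \<mu> p * cnj (\<mu> q) * b2 (g p) (g q))"
    by (simp only: k3) (simp add: algebra_simps sum.distrib sum_distrib_left)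
  also have "(\<Sum>p<Suc m. \<Sum>q<Suc m. b1 (f' p) (f' q) * b2 (g p) (g q))
     = (\<Sum>p<m. \<Sum>q<m. b1 (f' p) (f' q) * b2 (g p) (g q))"
    by (simp add: z1 z2)
  also have "(\<Sum>p<Suc m. \<Sum>q<Suc m. \<mu> p * cnj (\<mu> q) * b2 (g p) (g q)) = b2 W W"
  proof -
    have "b2 W W = (\<Sum>p<Suc m. b2 (s2 (\<mu> p) (g p)) W)" unfolding W_def[of] by (rule P2.lsum)
    also have "\<dots> = (\<Sum>p<Suc m. \<Sum>q<Suc m. b2 (s2 (\<mu> p) (g p)) (s2 (\<mu> q) (g q)))"
      unfolding W_def by (simp only: P2.rsum)
    also have "\<dots> = (\<Sum>p<Suc m. \<Sum>q<Suc m. \<mu> p * cnj (\<mu> q) * b2 (g p) (g q))"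
      by (simp only: P2.lscale P2.rscale) (simp add: algebra_simps)
    finally show ?thesis by simp
  qed
  finally have eq: "(\<Sum>p<Suc m. \<Sum>q<Suc m. b1 (f p) (f q) * b2 (g p) (g q))
     = (\<Sum>p<m. \<Sum>q<m. b1 (f' p) (f' q) * b2 (g p) (g q)) + b1 u u * b2 W W" .
  show ?case unfolding eq
    by (intro nn_add nn_mult Suc.IH Suc.prems P1.nn_diag P2.nn_diag)
qed


lemma hilbert_psd:
  assumes "hilbert_space s ip"
  shows "psd s ip"
proof -
  have h: "ip x y = cnj (ip y x)" for x y using assms unfolding hilbert_space_def by blast
  have la: "ip (x + y) z = ip x z + ip y z" for x y z using assms unfolding hilbert_space_def by blast
  have ls: "ip (s c x) z = c * ip x z" for c x z using assms unfolding hilbert_space_def by blast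
  have pos: "0 \<le> Re (ip x x)" for x using assms unfolding hilbert_space_def by blast
  show ?thesis
  proof (unfold_locales)
    fix x y z show "ip (x + y) z = ip x z + ip y z" by (rule la)
  next
    fix c x z show "ip (s c x) z = c * ip x z" by (rule ls)
  next
    fix x y z show "ip x (y + z) = ip x y + ip x z"
      using h[of x "y+z"] la[of y z x] h[of y x] h[of z x] by simp
  next
    fix c x y show "ip x (s c y) = cnj c * ip x y"
      using h[of x "s c y"] ls[of c y x] h[of y x] by simp
  next
    fix x y show "ip x y = cnj (ip y x)" by (rule h)
  next
    fix x show "0 \<le> Re (ip x x)" by (rule pos)
  qed
qed

lemma (in psd) hnorm_nonneg: "0 \<le> hnorm b x" by (simp add: hnorm_def pos)
lemma (in psd) cs_h: "cmod (b x y) \<le> hnorm b x * hnorm b y" unfolding hnorm_def by (rule cs)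

lemma psd_lin:
  assumes "sesq s b1" "sesq s b2" "\<And>x y. b1 x y = cnj (b1 y x)" "\<And>x y. b2 x y = cnj (b2 y x)"
    and "\<And>x. 0 \<le> \<alpha> * Re (b1 x x) + \<beta> * Re (b2 x x)"
  shows "psd s (\<lambda>x y. complex_of_real \<alpha> * b1 x y + complex_of_real \<beta> * b2 x y)"
proof -
  interpret S1: sesq s b1 by fact
  interpret S2: sesq s b2 by fact
  show ?thesis
  proof
    fix x y z
    show "complex_of_real \<alpha> * b1 (x + y) z + complex_of_real \<beta> * b2 (x + y) z =
      complex_of_real \<alpha> * b1 x z + complex_of_real \<beta> * b2 x z + (complex_of_real \<alpha> * b1 y z + complex_of_real \<beta> * b2 y z)"
      by (simp add: S1.ladd S2.ladd algebra_simps)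
    show "complex_of_real \<alpha> * b1 x (y + z) + complex_of_real \<beta> * b2 x (y + z) =
      complex_of_real \<alpha> * b1 x y + complex_of_real \<beta> * b2 x y + (complex_of_real \<alpha> * b1 x z + complex_of_real \<beta> * b2 x z)"
      by (simp add: S1.radd S2.radd algebra_simps)
  next
    fix c x z
    show "complex_of_real \<alpha> * b1 (s c x) z + complex_of_real \<beta> * b2 (s c x) z =
       c * (complex_of_real \<alpha> * b1 x z + complex_of_real \<beta> * b2 x z)"
      by (simp add: S1.lscale S2.lscale algebra_simps)
    show "complex_of_real \<alpha> * b1 z (s c x) + complex_of_real \<beta> * b2 z (s c x) =
       cnj c * (complex_of_real \<alpha> * b1 z x + complex_of_real \<beta> * b2 z x)"
      by (simp add: S1.rscale S2.rscale algebra_simps)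
  next
    fix x y
    have h1: "b1 x y = cnj (b1 y x)" and h2: "b2 x y = cnj (b2 y x)" using assms(3,4) .
    show "complex_of_real \<alpha> * b1 x y + complex_of_real \<beta> * b2 x y =
       cnj (complex_of_real \<alpha> * b1 y x + complex_of_real \<beta> * b2 y x)"
      by (simp only: h1 h2) simp
  next
    fix x
    show "0 \<le> Re (complex_of_real \<alpha> * b1 x x + complex_of_real \<beta> * b2 x x)"
      using assms(5)[of x] by simp
  qed
qed

lemma sesq_prod:
  assumes "psd s ip"
  shows "sesq s (\<lambda>u v. ip u p * ip q v)"
proof -
  interpret P: psd s ip by fact
  show ?thesis by unfold_locales (simp_all add: P.ladd P.radd P.lscale P.rscale algebra_simps)
qed

lemma (in sesq) polar:
  "b u v = (b (u + s 1 v) (u + s 1 v) - b (u + s (-1) v) (u + s (-1) v)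
     + \<i> * b (u + s \<i> v) (u + s \<i> v) - \<i> * b (u + s (-\<i>) v) (u + s (-\<i>) v)) / 4"
  by (simp add: ladd radd lscale rscale algebra_simps)

lemma frame_form:
  assumes H: "hilbert_space s ip" and fr: "controlled_frame ip j C fs A B"
    and Phi_def: "\<Phi> = (\<lambda>u v. \<Sum>i. ip u (j (fs i)) * ip (C (j (fs i))) v)"
  shows "summable (\<lambda>i. ip u (j (fs i)) * ip (C (j (fs i))) v)"
    and "sesq s \<Phi>" and "\<Phi> x y = cnj (\<Phi> y x)"
    and "A * Re (ip x x) \<le> Re (\<Phi> x x)" and "Re (\<Phi> x x) \<le> B * Re (ip x x)" and "Im (\<Phi> x x) = 0"
proof -
  interpret P: psd s ip using H by (rule hilbert_psd)
  define a where "a i u v = ip u (j (fs i)) * ip (C (j (fs i))) v" for i u v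
  have sa: "sesq s (a i)" for i unfolding a_def by (rule sesq_prod) (rule P.psd_axioms)
  have diag: "\<exists>t. (\<lambda>i. a i w w) sums t \<and> Im t = 0 \<and> A * Re (ip w w) \<le> Re t \<and> Re t \<le> B * Re (ip w w)" for w
  proof -
    obtain t where t: "(\<lambda>i. a i w w) sums t" "Im t = 0" "A * (hnorm ip w)\<^sup>2 \<le> Re t" "Re t \<le> B * (hnorm ip w)\<^sup>2"
      using fr unfolding controlled_frame_def a_def by blast
    have "(hnorm ip w)\<^sup>2 = Re (ip w w)" unfolding hnorm_def using P.pos[of w] by simp
    thus ?thesis using t by auto
  qed
  have sd: "summable (\<lambda>i. a i w w)" for w using diag[of w] sums_summable by blast
  have sum_all: "summable (\<lambda>i. a i u v)" for u v
  proof -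
    have eq: "(\<lambda>i. a i u v) = (\<lambda>i. (a i (u + s 1 v) (u + s 1 v) - a i (u + s (-1) v) (u + s (-1) v)
     + \<i> * a i (u + s \<i> v) (u + s \<i> v) - \<i> * a i (u + s (-\<i>) v) (u + s (-\<i>) v)) / 4)"
      by (rule ext) (rule sesq.polar[OF sa])
    show ?thesis unfolding eq
      by (intro summable_divide summable_add summable_diff summable_mult sd)
  qed
  then show "summable (\<lambda>i. ip u (j (fs i)) * ip (C (j (fs i))) v)" unfolding a_def .
  have Phi: "\<Phi> u v = suminf (\<lambda>i. a i u v)" for u v unfolding Phi_def a_def by simp
  show ses: "sesq s \<Phi>"
  proof
    fix x y z
    show "\<Phi> (x + y) z = \<Phi> x z + \<Phi> y z" unfolding Phi
      by (simp add: suminf_add[OF sum_all sum_all] sesq.ladd[OF sa])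
    show "\<Phi> x (y + z) = \<Phi> x y + \<Phi> x z" unfolding Phi
      by (simp add: suminf_add[OF sum_all sum_all] sesq.radd[OF sa])
  next
    fix c x z
    show "\<Phi> (s c x) z = c * \<Phi> x z" unfolding Phi
      by (simp add: suminf_mult[OF sum_all] sesq.lscale[OF sa])
    show "\<Phi> z (s c x) = cnj c * \<Phi> z x" unfolding Phi
      by (simp add: suminf_mult[OF sum_all] sesq.rscale[OF sa])
  qed
  have dd: "Im (\<Phi> w w) = 0 \<and> A * Re (ip w w) \<le> Re (\<Phi> w w) \<and> Re (\<Phi> w w) \<le> B * Re (ip w w)" for w
  proof -
    obtain t where t: "(\<lambda>i. a i w w) sums t" "Im t = 0" "A * Re (ip w w) \<le> Re t" "Re t \<le> B * Re (ip w w)"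
      using diag by blast
    have "\<Phi> w w = t" unfolding Phi using t(1) by (rule sums_unique[symmetric])
    thus ?thesis using t by simp
  qed
  show "\<Phi> x y = cnj (\<Phi> y x)" using sesq.herm_if_real_diag[OF ses] dd by blast
  show "A * Re (ip x x) \<le> Re (\<Phi> x x)" "Re (\<Phi> x x) \<le> B * Re (ip x x)" "Im (\<Phi> x x) = 0" using dd by auto
qed

lemma add_sum:
  fixes S :: "'a::ab_group_add \<Rightarrow> 'b::ab_group_add"
  assumes "\<And>x y. S (x + y) = S x + S y"
  shows "S (sum h A) = (\<Sum>a\<in>A. S (h a))"
proof -
  have "S 0 + S 0 = S 0 + 0" using assms[of 0 0] by simp
  from add_left_imp_eq[OF this] have z: "S 0 = 0" .
  show ?thesis by (induction A rule: infinite_finite_induct) (auto simp: z assms)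
qed

lemma (in psd) cont_bound:
  assumes Sadd: "\<And>x y. S (x + y) = S x + S y" and bnd: "\<And>z. hnorm b (S z) \<le> M * hnorm b z"
    and M: "0 \<le> M" and d1: "hnorm b (x - y) \<le> 1"
  shows "cmod (b (S y) y - b (S x) x) \<le> (hnorm b (S x) + M * hnorm b x + M) * hnorm b (x - y)"
proof -
  define z where "z = x - y"
  have y: "y = x - z" by (simp add: z_def)
  have "S x = S (x - z) + S z" using Sadd[of "x-z" z] by simp
  hence Sm: "S (x - z) = S x - S z" by (simp add: algebra_simps)
  have eq: "b (S y) y - b (S x) x = - b (S x) z - b (S z) x + b (S z) z"
    by (simp add: y Sm lminus rminus)
  have tri: "cmod (- p - q + r) \<le> cmod p + cmod q + cmod r" for p q r :: complex
  proof -
    have "cmod (- p - q + r) \<le> cmod (- p - q) + cmod r" by (rule norm_triangle_ineq)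
    moreover have "cmod (- p - q) \<le> cmod (- p) + cmod q" by (rule norm_triangle_ineq4)
    ultimately show ?thesis by simp
  qed
  have hz: "0 \<le> hnorm b z" "hnorm b z \<le> 1" using d1 by (simp_all add: z_def hnorm_nonneg)
  have hx: "0 \<le> hnorm b x" by (rule hnorm_nonneg)
  have e1: "cmod (b (S x) z) \<le> hnorm b (S x) * hnorm b z" by (rule cs_h)
  have e2: "cmod (b (S z) x) \<le> M * hnorm b z * hnorm b x"
    using cs_h[of "S z" x] mult_right_mono[OF bnd[of z] hx] by linarith
  have "cmod (b (S z) z) \<le> M * hnorm b z * hnorm b z"
    using cs_h[of "S z" z] mult_right_mono[OF bnd[of z] hz(1)] by linarith
  also have "\<dots> \<le> M * hnorm b z * 1" using hz M by (intro mult_left_mono) simp_all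
  finally have e3: "cmod (b (S z) z) \<le> M * hnorm b z" by simp
  have "cmod (b (S y) y - b (S x) x) \<le> hnorm b (S x) * hnorm b z + M * hnorm b z * hnorm b x + M * hnorm b z"
    unfolding eq using tri[of "b (S x) z" "b (S z) x" "b (S z) z"] e1 e2 e3 by linarith
  thus ?thesis by (simp add: z_def algebra_simps)
qed


lemma tensor_entry:
  fixes u :: "nat \<times> nat \<Rightarrow> 't::ab_group_add"
  assumes P: "psd sT ipT" and unc: "hsum_unconditional ipT u UNIV L"
    and ent: "\<And>i k. ipT (u (i,k)) y = a i * c k"
    and sa: "summable a" and sc: "summable c"
  shows "ipT L y = suminf a * suminf c"
proof -
  interpret P: psd sT ipT by fact
  define X where "X N = ipT (sum u ({..<N} \<times> {..<N})) y" for N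
  have X: "X N = (\<Sum>i<N. a i) * (\<Sum>k<N. c k)" for N
  proof -
    have "X N = (\<Sum>z\<in>{..<N}\<times>{..<N}. ipT (u z) y)" unfolding X_def by (rule P.lsum)
    also have "\<dots> = (\<Sum>z\<in>{..<N}\<times>{..<N}. case z of (i,k) \<Rightarrow> a i * c k)"
      by (rule sum.cong) (auto simp: ent)
    also have "\<dots> = (\<Sum>i<N. \<Sum>k<N. a i * c k)" by (rule sum.cartesian_product[symmetric])
    also have "\<dots> = (\<Sum>i<N. a i) * (\<Sum>k<N. c k)" by (rule sum_product[symmetric])
    finally show ?thesis .
  qed
  have l1: "X \<longlonglongrightarrow> suminf a * suminf c" unfolding X by (intro tendsto_mult summable_LIMSEQ sa sc)
  have l2: "X \<longlonglongrightarrow> ipT L y"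
  proof (rule LIMSEQ_I)
    fix e :: real assume e: "0 < e"
    define e' where "e' = e / (hnorm ipT y + 1)"
    have hy: "0 \<le> hnorm ipT y" by (rule P.hnorm_nonneg)
    have e': "0 < e'" using e hy by (simp add: e'_def)
    from unc[unfolded hsum_unconditional_def, rule_format, OF e'] obtain F0 where
      F0: "finite F0" "\<forall>F. finite F \<and> F0 \<subseteq> F \<and> F \<subseteq> UNIV \<longrightarrow> hnorm ipT (sum u F - L) < e'"
      by blast
    have "finite (fst ` F0)" "finite (snd ` F0)" using F0(1) by auto
    then obtain N1 N2 where N: "fst ` F0 \<subseteq> {..<N1}" "snd ` F0 \<subseteq> {..<N2}"
      unfolding finite_nat_iff_bounded by blast
    define N0 where "N0 = max N1 N2"
    have sub: "F0 \<subseteq> {..<n}\<times>{..<n}" if "N0 \<le> n" for n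
    proof
      fix z assume "z \<in> F0"
      then have "fst z < N1" "snd z < N2" using N by auto
      then show "z \<in> {..<n}\<times>{..<n}" using that unfolding N0_def by (cases z) auto
    qed
    have be1: "e' * hnorm ipT y < e' * (hnorm ipT y + 1)" using e' by simp
    have be2: "e' * (hnorm ipT y + 1) = e" unfolding e'_def using hy by simp
    have be: "e' * hnorm ipT y < e" using be1 be2 by simp
    show "\<exists>no. \<forall>n\<ge>no. norm (X n - ipT L y) < e"
    proof (intro exI allI impI)
      fix n assume n: "N0 \<le> n"
      have h: "hnorm ipT (sum u ({..<n}\<times>{..<n}) - L) < e'" using F0(2) sub[OF n] by auto
      have "norm (X n - ipT L y) = cmod (ipT (sum u ({..<n}\<times>{..<n}) - L) y)" by (simp add: X_def P.lminus)
      also have "\<dots> \<le> hnorm ipT (sum u ({..<n}\<times>{..<n}) - L) * hnorm ipT y" by (rule P.cs_h)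
      also have "\<dots> \<le> e' * hnorm ipT y" using h hy by (intro mult_right_mono) simp_all
      also have "\<dots> < e" by (rule be)
      finally show "norm (X n - ipT L y) < e" .
    qed
  qed
  show ?thesis using LIMSEQ_unique[OF l2 l1] .
qed

lemma (in psd) limit_ext:
  assumes Sadd: "\<And>x y. S (x + y) = S x + S y" and bnd: "\<And>z. hnorm b (S z) \<le> M * hnorm b z" and M: "0 \<le> M"
    and dense: "\<And>e. e > 0 \<Longrightarrow> \<exists>y. P y \<and> hnorm b (x - y) < e"
    and PQ: "\<And>y. P y \<Longrightarrow> Im (b (S y) y) = 0 \<and> \<alpha> * Re (b y y) \<le> Re (b (S y) y) \<and> Re (b (S y) y) \<le> \<beta> * Re (b y y)"
  shows "Im (b (S x) x) = 0 \<and> \<alpha> * Re (b x x) \<le> Re (b (S x) x) \<and> Re (b (S x) x) \<le> \<beta> * Re (b x x)"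
proof -
  have "\<forall>k. \<exists>y. P y \<and> hnorm b (x - y) < inverse (real (Suc k))" using dense by simp
  from choice[OF this] obtain Y where Y0: "\<forall>k. P (Y k) \<and> hnorm b (x - Y k) < inverse (real (Suc k))" by blast
  have Y: "\<And>k. P (Y k)" "\<And>k. hnorm b (x - Y k) < inverse (real (Suc k))" using Y0 by auto
  have conv: "(\<lambda>k. b (T (Y k)) (Y k)) \<longlonglongrightarrow> b (T x) x"
    if Tadd: "\<And>x y. T (x + y) = T x + T y" and Tb: "\<And>z. hnorm b (T z) \<le> K * hnorm b z" and K: "0 \<le> K" for T K
  proof -
    define G where "G = hnorm b (T x) + K * hnorm b x + K"
    have G0: "0 \<le> G" unfolding G_def using K hnorm_nonneg[of "T x"] hnorm_nonneg[of x] by simp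
    have "((\<lambda>k. b (T (Y k)) (Y k) - b (T x) x) \<longlongrightarrow> 0) sequentially"
    proof (rule tendsto_0_le[OF LIMSEQ_inverse_real_of_nat, where K=G])
      show "eventually (\<lambda>k. norm (b (T (Y k)) (Y k) - b (T x) x) \<le> norm (inverse (real (Suc k))) * G) sequentially"
      proof (rule always_eventually, rule allI)
        fix k
        have i1: "inverse (real (Suc k)) \<le> 1" by (simp add: inverse_le_1_iff)
        have d: "hnorm b (x - Y k) \<le> 1" using Y(2)[of k] i1 by linarith
        have "norm (b (T (Y k)) (Y k) - b (T x) x) \<le> G * hnorm b (x - Y k)"
          using cont_bound[OF Tadd Tb K d] by (simp add: G_def)
        also have "\<dots> \<le> G * inverse (real (Suc k))" using Y(2)[of k] G0 by (intro mult_left_mono) auto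
        finally show "norm (b (T (Y k)) (Y k) - b (T x) x) \<le> norm (inverse (real (Suc k))) * G"
          by (simp add: mult.commute)
      qed
    qed
    thus ?thesis by (simp add: LIM_zero_iff)
  qed
  have c1: "(\<lambda>k. b (S (Y k)) (Y k)) \<longlonglongrightarrow> b (S x) x" by (rule conv[OF Sadd bnd M])
  have c2: "(\<lambda>k. b (Y k) (Y k)) \<longlonglongrightarrow> b x x" using conv[of "\<lambda>z. z" 1] by simp
  have im: "Im (b (S x) x) = 0"
  proof -
    have "(\<lambda>k. Im (b (S (Y k)) (Y k))) \<longlonglongrightarrow> Im (b (S x) x)" by (rule tendsto_Im[OF c1])
    moreover have "(\<lambda>k. Im (b (S (Y k)) (Y k))) = (\<lambda>k. 0)" using PQ[OF Y(1)] by auto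
    ultimately have "(\<lambda>k. 0) \<longlonglongrightarrow> Im (b (S x) x)" by simp
    thus ?thesis by (simp add: LIMSEQ_const_iff)
  qed
  have lo: "\<alpha> * Re (b x x) \<le> Re (b (S x) x)"
    by (rule LIMSEQ_le[OF tendsto_mult[OF tendsto_const tendsto_Re[OF c2]] tendsto_Re[OF c1]])
      (use PQ[OF Y(1)] in auto)
  have hi: "Re (b (S x) x) \<le> \<beta> * Re (b x x)"
    by (rule LIMSEQ_le[OF tendsto_Re[OF c1] tendsto_mult[OF tendsto_const tendsto_Re[OF c2]]])
      (use PQ[OF Y(1)] in auto)
  show ?thesis using im lo hi by blast
qed

theorem proposition4p6:
  fixes n :: nat
    and sH :: "complex \<Rightarrow> 'h::ab_group_add \<Rightarrow> 'h" and ipH :: "'h \<Rightarrow> 'h \<Rightarrow> 'h list \<Rightarrow> complex"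
    and sK :: "complex \<Rightarrow> 'k::ab_group_add \<Rightarrow> 'k" and ipK :: "'k \<Rightarrow> 'k \<Rightarrow> 'k list \<Rightarrow> complex"
    and as :: "'h list" and bs :: "'k list"
    and sF :: "complex \<Rightarrow> 'f::ab_group_add \<Rightarrow> 'f" and ipF :: "'f \<Rightarrow> 'f \<Rightarrow> complex" and jF :: "'h \<Rightarrow> 'f"
    and sG :: "complex \<Rightarrow> 'g::ab_group_add \<Rightarrow> 'g" and ipG :: "'g \<Rightarrow> 'g \<Rightarrow> complex" and jG :: "'k \<Rightarrow> 'g"
    and sT :: "complex \<Rightarrow> 't::ab_group_add \<Rightarrow> 't" and ipT :: "'t \<Rightarrow> 't \<Rightarrow> complex"
    and tp :: "'f \<Rightarrow> 'g \<Rightarrow> 't"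
    and C1 :: "'f \<Rightarrow> 'f" and C2 :: "'g \<Rightarrow> 'g"
    and fs :: "nat \<Rightarrow> 'h" and gs :: "nat \<Rightarrow> 'k"
    and A B C D :: real
    and S :: "'t \<Rightarrow> 't"
  assumes "n \<ge> 2"
    and "n_hilbert_space n sH ipH" and "n_hilbert_space n sK ipK"
    and "length as = n - 1" and "length bs = n - 1"
    and "is_HF sH ipH as sF ipF jF" and "is_HF sK ipK bs sG ipG jG"
    and "C1 \<in> GB sF ipF" and "C2 \<in> GB sG ipG"
    and "controlled_frame ipF jF C1 fs A B"
    and "controlled_frame ipG jG C2 gs C D"
    and "is_hilbert_tensor sF ipF sG ipG sT ipT tp"
    and "is_tensor_frame_operator ipF jF C1 fs ipG jG C2 gs sT ipT tp S"
  shows "\<forall>x. Im (ipT (S x) x) = 0 \<and>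
             A * C * Re (ipT x x) \<le> Re (ipT (S x) x) \<and>
             Re (ipT (S x) x) \<le> B * D * Re (ipT x x)"
proof -
  have HF: "hilbert_space sF ipF" using assms(6) unfolding is_HF_def by blast
  have HG: "hilbert_space sG ipG" using assms(7) unfolding is_HF_def by blast
  have HT: "hilbert_space sT ipT" using assms(12) unfolding is_hilbert_tensor_def by blast
  have tpip: "\<And>x y x' y'. ipT (tp x y) (tp x' y') = ipF x x' * ipG y y'"
    using assms(12) unfolding is_hilbert_tensor_def by blast
  have dense: "\<And>z e. e > 0 \<Longrightarrow> \<exists>ps. hnorm ipT (z - sum_list (map (\<lambda>(x, y). tp x y) ps)) < e"
    using assms(12) unfolding is_hilbert_tensor_def by blast
  have bS: "bounded_op sT ipT S" using assms(13) unfolding is_tensor_frame_operator_def by blast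
  have Sunc: "\<And>f g. hsum_unconditional ipT
        (\<lambda>(i, k). sT (ipF f (jF (fs i)) * ipG g (jG (gs k)))
                       (tp (C1 (jF (fs i))) (C2 (jG (gs k)))))
        UNIV (S (tp f g))"
    using assms(13) unfolding is_tensor_frame_operator_def by blast
  have Sadd: "\<And>x y. S (x + y) = S x + S y" using bS unfolding bounded_op_def by blast
  obtain M0 where M0: "\<And>x. hnorm ipT (S x) \<le> M0 * hnorm ipT x" using bS unfolding bounded_op_def by blast
  interpret PF: psd sF ipF using HF by (rule hilbert_psd)
  interpret PG: psd sG ipG using HG by (rule hilbert_psd)
  interpret PT: psd sT ipT using HT by (rule hilbert_psd)
  define M where "M = max M0 0"
  have M: "0 \<le> M" by (simp add: M_def)
  have Mb: "\<And>x. hnorm ipT (S x) \<le> M * hnorm ipT x"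
  proof -
    fix x
    have "M0 * hnorm ipT x \<le> M * hnorm ipT x"
      using PT.hnorm_nonneg[of x] by (intro mult_right_mono) (simp_all add: M_def)
    thus "hnorm ipT (S x) \<le> M * hnorm ipT x" using M0[of x] by linarith
  qed
  have fr1: "0 < A" "A \<le> B" using assms(10) unfolding controlled_frame_def by auto
  have fr2: "0 < C" "C \<le> D" using assms(11) unfolding controlled_frame_def by auto
  define \<Phi>1 where "\<Phi>1 = (\<lambda>u v. \<Sum>i. ipF u (jF (fs i)) * ipF (C1 (jF (fs i))) v)"
  define \<Phi>2 where "\<Phi>2 = (\<lambda>u v. \<Sum>i. ipG u (jG (gs i)) * ipG (C2 (jG (gs i))) v)"
  note F1 = frame_form[OF HF assms(10) \<Phi>1_def]
  note F2 = frame_form[OF HG assms(11) \<Phi>2_def]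
  have q1: "psd sF (\<lambda>x y. complex_of_real 1 * \<Phi>1 x y + complex_of_real (-A) * ipF x y)"
    by (rule psd_lin[OF F1(2) PF.sesq_axioms F1(3) PF.herm]) (use F1(4) in simp)
  have q2: "psd sF (\<lambda>x y. complex_of_real B * ipF x y + complex_of_real (-1) * \<Phi>1 x y)"
    by (rule psd_lin[OF PF.sesq_axioms F1(2) PF.herm F1(3)]) (use F1(5) in simp)
  have q3: "psd sG (\<lambda>x y. complex_of_real 1 * \<Phi>2 x y + complex_of_real 0 * ipG x y)"
  proof (rule psd_lin[OF F2(2) PG.sesq_axioms F2(3) PG.herm])
    fix x
    have "0 \<le> C * Re (ipG x x)" using fr2 PG.pos[of x] by simp
    thus "0 \<le> 1 * Re (\<Phi>2 x x) + 0 * Re (ipG x x)" using F2(4)[of x] by simp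
  qed
  have q4: "psd sG (\<lambda>x y. complex_of_real 1 * \<Phi>2 x y + complex_of_real (-C) * ipG x y)"
    by (rule psd_lin[OF F2(2) PG.sesq_axioms F2(3) PG.herm]) (use F2(4) in simp)
  have q5: "psd sG (\<lambda>x y. complex_of_real D * ipG x y + complex_of_real (-1) * \<Phi>2 x y)"
    by (rule psd_lin[OF PG.sesq_axioms F2(2) PG.herm F2(3)]) (use F2(5) in simp)
  have entry: "ipT (S (tp f g)) (tp f' g') = \<Phi>1 f f' * \<Phi>2 g g'" for f g f' g'
  proof -
    have "ipT (S (tp f g)) (tp f' g') = (\<Sum>i. ipF f (jF (fs i)) * ipF (C1 (jF (fs i))) f') *
       (\<Sum>k. ipG g (jG (gs k)) * ipG (C2 (jG (gs k))) g')"
      by (rule tensor_entry[OF PT.psd_axioms Sunc[of f g]])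
         (simp_all add: PT.lscale tpip F1(1) F2(1) algebra_simps)
    thus ?thesis by (simp add: \<Phi>1_def \<Phi>2_def)
  qed
  define P where "P y \<longleftrightarrow> (\<exists>ps. y = sum_list (map (\<lambda>(x, y). tp x y) ps))" for y
  have fin: "Im (ipT (S y) y) = 0 \<and> A * C * Re (ipT y y) \<le> Re (ipT (S y) y) \<and> Re (ipT (S y) y) \<le> B * D * Re (ipT y y)"
    if Py: "P y" for y
  proof -
    obtain ps where ps: "y = sum_list (map (\<lambda>(x, y). tp x y) ps)" using Py unfolding P_def by blast
    define m where "m = length ps"
    define fp where "fp p = fst (ps ! p)" for p
    define gp where "gp p = snd (ps ! p)" for p
    have sl: "sum_list (map h ps) = (\<Sum>p<length ps. h (ps ! p))" for h :: "'f \<times> 'g \<Rightarrow> 't"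
      by (simp only: sum_list_sum_nth length_map atLeast0LessThan) (rule sum.cong; simp)
    have xe: "y = (\<Sum>p<m. tp (fp p) (gp p))"
      unfolding ps sl m_def fp_def gp_def by (simp add: case_prod_beta)
    have SX: "ipT (S y) y = (\<Sum>p<m. \<Sum>q<m. \<Phi>1 (fp p) (fp q) * \<Phi>2 (gp p) (gp q))"
      unfolding xe by (simp add: add_sum[OF Sadd] PT.lsum PT.rsum entry) (rule sum.swap)
    have XX: "ipT y y = (\<Sum>p<m. \<Sum>q<m. ipF (fp p) (fp q) * ipG (gp p) (gp q))"
      unfolding xe by (simp add: PT.lsum PT.rsum tpip) (rule sum.swap)
    note n1 = schur[OF q1 q3, where m=m and f=fp and g=gp]
    note n2 = schur[OF PF.psd_axioms q4, where m=m and f=fp and g=gp]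
    note n3 = schur[OF q2 q3, where m=m and f=fp and g=gp]
    note n4 = schur[OF PF.psd_axioms q5, where m=m and f=fp and g=gp]
    define T1 where "T1 = (\<Sum>p<m. \<Sum>q<m. (complex_of_real 1 * \<Phi>1 (fp p) (fp q) + complex_of_real (-A) * ipF (fp p) (fp q)) *
        (complex_of_real 1 * \<Phi>2 (gp p) (gp q) + complex_of_real 0 * ipG (gp p) (gp q)))"
    define T2 where "T2 = (\<Sum>p<m. \<Sum>q<m. ipF (fp p) (fp q) *
        (complex_of_real 1 * \<Phi>2 (gp p) (gp q) + complex_of_real (-C) * ipG (gp p) (gp q)))"
    define T3 where "T3 = (\<Sum>p<m. \<Sum>q<m. (complex_of_real B * ipF (fp p) (fp q) + complex_of_real (-1) * \<Phi>1 (fp p) (fp q)) *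
        (complex_of_real 1 * \<Phi>2 (gp p) (gp q) + complex_of_real 0 * ipG (gp p) (gp q)))"
    define T4 where "T4 = (\<Sum>p<m. \<Sum>q<m. ipF (fp p) (fp q) *
        (complex_of_real D * ipG (gp p) (gp q) + complex_of_real (-1) * \<Phi>2 (gp p) (gp q)))"
    have nT1: "nn T1" unfolding T1_def using n1 by simp
    have nT2: "nn T2" unfolding T2_def using n2 by simp
    have nT3: "nn T3" unfolding T3_def using n3 by simp
    have nT4: "nn T4" unfolding T4_def using n4 by simp
    have id1: "ipT (S y) y = T1 + complex_of_real A * T2 + complex_of_real (A * C) * ipT y y"
    proof -
      have "ipT (S y) y = (\<Sum>p<m. \<Sum>q<m.
          (complex_of_real 1 * \<Phi>1 (fp p) (fp q) + complex_of_real (-A) * ipF (fp p) (fp q)) *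
          (complex_of_real 1 * \<Phi>2 (gp p) (gp q) + complex_of_real 0 * ipG (gp p) (gp q))
          + complex_of_real A * (ipF (fp p) (fp q) *
          (complex_of_real 1 * \<Phi>2 (gp p) (gp q) + complex_of_real (-C) * ipG (gp p) (gp q)))
          + complex_of_real (A * C) * (ipF (fp p) (fp q) * ipG (gp p) (gp q)))"
        unfolding SX by (intro sum.cong refl) (simp add: algebra_simps)
      also have "\<dots> = T1 + complex_of_real A * T2 + complex_of_real (A * C) * ipT y y"
        unfolding T1_def T2_def XX by (simp add: sum.distrib sum_distrib_left)
      finally show ?thesis .
    qed
    have id2: "complex_of_real (B * D) * ipT y y = T3 + complex_of_real B * T4 + ipT (S y) y"
    proof -
      have "complex_of_real (B * D) * ipT y y = (\<Sum>p<m. \<Sum>q<m.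
          (complex_of_real B * ipF (fp p) (fp q) + complex_of_real (-1) * \<Phi>1 (fp p) (fp q)) *
          (complex_of_real 1 * \<Phi>2 (gp p) (gp q) + complex_of_real 0 * ipG (gp p) (gp q))
          + complex_of_real B * (ipF (fp p) (fp q) *
          (complex_of_real D * ipG (gp p) (gp q) + complex_of_real (-1) * \<Phi>2 (gp p) (gp q)))
          + \<Phi>1 (fp p) (fp q) * \<Phi>2 (gp p) (gp q))"
        unfolding XX sum_distrib_left by (intro sum.cong refl) (simp add: algebra_simps)
      also have "\<dots> = T3 + complex_of_real B * T4 + ipT (S y) y"
        unfolding T3_def T4_def SX by (simp add: sum.distrib sum_distrib_left)
      finally show ?thesis .
    qed
    have imy: "Im (ipT y y) = 0" by (rule PT.diag_real)
    have A0: "0 \<le> A" "0 \<le> B" using fr1 by auto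
    have Im1: "Im (ipT (S y) y) = 0" using arg_cong[where f=Im, OF id1] nT1 nT2 imy unfolding nn_def by simp
    have Re1: "Re (ipT (S y) y) = Re T1 + A * Re T2 + A * C * Re (ipT y y)"
      using arg_cong[where f=Re, OF id1] nT1 nT2 imy unfolding nn_def by simp
    have Re2: "B * D * Re (ipT y y) = Re T3 + B * Re T4 + Re (ipT (S y) y)"
      using arg_cong[where f=Re, OF id2] nT3 nT4 imy unfolding nn_def by simp
    have "0 \<le> A * Re T2" "0 \<le> B * Re T4" using A0 nT2 nT4 unfolding nn_def by simp_all
    then show ?thesis using Im1 Re1 Re2 nT1 nT3 unfolding nn_def by linarith
  qed
  show ?thesis
  proof
    fix x
    show "Im (ipT (S x) x) = 0 \<and> A * C * Re (ipT x x) \<le> Re (ipT (S x) x) \<and> Re (ipT (S x) x) \<le> B * D * Re (ipT x x)"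
    proof (rule PT.limit_ext[OF Sadd Mb M, where P=P])
      fix e :: real assume "e > 0"
      then obtain ps where "hnorm ipT (x - sum_list (map (\<lambda>(x, y). tp x y) ps)) < e" using dense by blast
      then show "\<exists>y. P y \<and> hnorm ipT (x - y) < e" unfolding P_def by blast
    next
      fix y assume "P y"
      then show "Im (ipT (S y) y) = 0 \<and> A * C * Re (ipT y y) \<le> Re (ipT (S y) y) \<and> Re (ipT (S y) y) \<le> B * D * Re (ipT y y)"
        by (rule fin)
    qed
  qed
qed

end
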